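(* The generating function $$G_{(231,312)}(x,p,q,y,z)=\sum_{n\ge 0}\ \sum_{\pi\in S_n(231,312)} x^n p^{\operatorname{asc}(\pi)} q^{\operatorname{des}(\pi)} y^{\operatorname{MNA}(\pi)} z^{\operatorname{MND}(\pi)}$$ is equal to $$\frac{1 + x + p x^2 y - p^2 x^2 y + q x^2 z - q^2 x^2 z - p q x^2 y z + p q x^3 y z - p^2 q x^3 y z - p q^2 x^3 y z}{1 - p^2 x^2 y - q^2 x^2 z - p q x^2 y z - p^2 q x^3 y z - p q^2 x^3 y z}.$$
   Context: For $n\ge 0$, $S_n$ denotes the set of permutations $\pi=\pi_1\pi_2\cdots\pi_n$ of $[n]=\{1,\dots,n\}$ ($S_0$ consists of the empty permutation, for which all statistics below are $0$). A permutation $\pi\in S_n$ avoids a pattern $\tau\in S_k$ if there are no indices $i_1<\dots<i_k$ such that $\pi_{i_a}<\pi_{i_b}$ if and only if $\tau_a<\tau_b$; $S_n(\tau,\rho)$ is the set of permutations in $S_n$ avoiding both $\tau$ and $\rho$. $\operatorname{asc}(\pi)$ (resp. $\operatorname{des}(\pi)$) is the number of $i\in[n-1]$ with $\pi_i<\pi_{i+1}$ (resp. $\pi_i>\pi_{i+1}$). $\operatorname{MNA}(\pi)$ is the maximum size of a set $I\subseteq[n-1]$ such that $\pi_i<\pi_{i+1}$ for all $i\in I$ and $|i-j|\ge 2$ for distinct $i,j\in I$; $\operatorname{MND}(\pi)$ is defined analogously with $\pi_i>\pi_{i+1}$. *)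

theory Defs
  imports "HOL-Computational_Algebra.Formal_Power_Series"
begin

text \<open>Permutations of [n] as lists (one-line notation), 0-indexed positions.\<close>
definition perms :: "nat \<Rightarrow> nat list set" where
  "perms n = {xs. distinct xs \<and> set xs = {1..n}}"

definition contains_pat :: "nat list \<Rightarrow> nat list \<Rightarrow> bool" where
  "contains_pat \<pi> \<tau> \<longleftrightarrow>
     (\<exists>\<iota>::nat \<Rightarrow> nat. strict_mono_on {..<length \<tau>} \<iota> \<and>
        (\<forall>a<length \<tau>. \<iota> a < length \<pi>) \<and>
        (\<forall>a<length \<tau>. \<forall>b<length \<tau>. (\<pi> ! (\<iota> a) < \<pi> ! (\<iota> b)) \<longleftrightarrow> (\<tau> ! a < \<tau> ! b)))"

definition avoids :: "nat list \<Rightarrow> nat list \<Rightarrow> bool" where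
  "avoids \<pi> \<tau> \<longleftrightarrow> \<not> contains_pat \<pi> \<tau>"

definition av2 :: "nat \<Rightarrow> nat list \<Rightarrow> nat list \<Rightarrow> nat list set" where
  "av2 n \<tau> \<rho> = {\<pi> \<in> perms n. avoids \<pi> \<tau> \<and> avoids \<pi> \<rho>}"

definition ascset :: "nat list \<Rightarrow> nat set" where
  "ascset \<pi> = {i. Suc i < length \<pi> \<and> \<pi> ! i < \<pi> ! Suc i}"

definition desset :: "nat list \<Rightarrow> nat set" where
  "desset \<pi> = {i. Suc i < length \<pi> \<and> \<pi> ! i > \<pi> ! Suc i}"

definition asc :: "nat list \<Rightarrow> nat" where "asc \<pi> = card (ascset \<pi>)"
definition des :: "nat list \<Rightarrow> nat" where "des \<pi> = card (desset \<pi>)"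

definition nonadj :: "nat set \<Rightarrow> bool" where
  "nonadj I \<longleftrightarrow> (\<forall>i\<in>I. \<forall>j\<in>I. i \<noteq> j \<longrightarrow> 2 \<le> (if i \<le> j then j - i else i - j))"

definition MNA :: "nat list \<Rightarrow> nat" where
  "MNA \<pi> = Max (card ` {I. I \<subseteq> ascset \<pi> \<and> nonadj I})"

definition MND :: "nat list \<Rightarrow> nat" where
  "MND \<pi> = Max (card ` {I. I \<subseteq> desset \<pi> \<and> nonadj I})"

definition G231_312 :: "'a::comm_ring_1 \<Rightarrow> 'a \<Rightarrow> 'a \<Rightarrow> 'a \<Rightarrow> 'a fps" where
  "G231_312 p q y z = Abs_fps (\<lambda>n. \<Sum>\<pi>\<in>av2 n [2,3,1] [3,1,2].
      p ^ asc \<pi> * q ^ des \<pi> * y ^ MNA \<pi> * z ^ MND \<pi>)"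

end

theory Submission
  imports Defs
begin

definition good :: "nat list \<Rightarrow> bool" where
 "good xs \<longleftrightarrow> (\<forall>i j k. i<j \<longrightarrow> j<k \<longrightarrow> k<length xs \<longrightarrow>
     \<not>(xs!k < xs!i \<and> xs!i < xs!j) \<and> \<not>(xs!j < xs!k \<and> xs!k < xs!i))"

lemma three_cases: "(\<forall>a<(3::nat). P a) \<longleftrightarrow> P 0 \<and> P 1 \<and> P 2"
  by (auto simp: numeral_eq_Suc less_Suc_eq)

lemma contains_3:
  assumes "length t = 3"
  shows "contains_pat xs t \<longleftrightarrow> (\<exists>i j k. i<j \<and> j<k \<and> k<length xs \<and>
    (\<forall>a<3. \<forall>b<3. (xs ! ([i,j,k]!a) < xs ! ([i,j,k]!b)) \<longleftrightarrow> (t!a < t!b)))"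
proof
  assume "contains_pat xs t"
  then obtain \<iota> where m: "strict_mono_on {..<length t} \<iota>" and l: "\<forall>a<length t. \<iota> a < length xs"
    and c: "\<forall>a<length t. \<forall>b<length t. (xs ! (\<iota> a) < xs ! (\<iota> b)) \<longleftrightarrow> (t ! a < t ! b)"
    unfolding contains_pat_def by blast
  have "\<iota> 0 < \<iota> 1" "\<iota> 1 < \<iota> 2" using m assms by (auto simp: strict_mono_on_def)
  moreover have "\<iota> 2 < length xs" using l assms by auto
  moreover have "\<forall>a<3. [\<iota> 0, \<iota> 1, \<iota> 2]!a = \<iota> a" by (simp add: three_cases)
  ultimately show "\<exists>i j k. i<j \<and> j<k \<and> k<length xs \<and>
    (\<forall>a<3. \<forall>b<3. (xs ! ([i,j,k]!a) < xs ! ([i,j,k]!b)) \<longleftrightarrow> (t!a < t!b))"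
    using c assms by (intro exI[of _ "\<iota> 0"] exI[of _ "\<iota> 1"] exI[of _ "\<iota> 2"]) auto
next
  assume "\<exists>i j k. i<j \<and> j<k \<and> k<length xs \<and>
    (\<forall>a<3. \<forall>b<3. (xs ! ([i,j,k]!a) < xs ! ([i,j,k]!b)) \<longleftrightarrow> (t!a < t!b))"
  then obtain i j k where h: "i<j" "j<k" "k<length xs"
    "\<forall>a<3. \<forall>b<3. (xs ! ([i,j,k]!a) < xs ! ([i,j,k]!b)) \<longleftrightarrow> (t!a < t!b)" by blast
  have m: "strict_mono_on {..<length t} (\<lambda>a. [i,j,k]!a)" using h assms
    by (auto simp: strict_mono_on_def numeral_eq_Suc less_Suc_eq)
  show "contains_pat xs t" unfolding contains_pat_def
    by (rule exI[of _ "\<lambda>a. [i,j,k]!a"]) (use m h assms in \<open>auto simp: numeral_eq_Suc less_Suc_eq\<close>)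
qed

lemma c231:
  "contains_pat xs [2,3,1] \<longleftrightarrow> (\<exists>i j k. i<j \<and> j<k \<and> k<length xs \<and> xs!k < xs!i \<and> xs!i < xs!j)"
proof
  assume "contains_pat xs [2,3,1]"
  then obtain i j k where h: "i<j" "j<k" "k<length xs"
    "\<forall>a<3. \<forall>b<3. (xs ! ([i,j,k]!a) < xs ! ([i,j,k]!b)) \<longleftrightarrow> ([2,3,1::nat]!a < [2,3,1]!b)"
    using contains_3[of "[2,3,1]" xs] by auto
  from h(4) have "xs!k < xs!i" "xs!i < xs!j" by (auto simp: three_cases)
  with h(1-3) show "\<exists>i j k. i<j \<and> j<k \<and> k<length xs \<and> xs!k < xs!i \<and> xs!i < xs!j" by blast
next
  assume "\<exists>i j k. i<j \<and> j<k \<and> k<length xs \<and> xs!k < xs!i \<and> xs!i < xs!j"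
  then obtain i j k where h: "i<j" "j<k" "k<length xs" "xs!k < xs!i" "xs!i < xs!j" by blast
  have "\<forall>a<3. \<forall>b<3. (xs ! ([i,j,k]!a) < xs ! ([i,j,k]!b)) \<longleftrightarrow> ([2,3,1::nat]!a < [2,3,1]!b)"
    using h(4,5) by (auto simp: three_cases)
  then show "contains_pat xs [2,3,1]" using contains_3[of "[2,3,1]" xs] h(1-3) by auto
qed

lemma c312:
  "contains_pat xs [3,1,2] \<longleftrightarrow> (\<exists>i j k. i<j \<and> j<k \<and> k<length xs \<and> xs!j < xs!k \<and> xs!k < xs!i)"
proof
  assume "contains_pat xs [3,1,2]"
  then obtain i j k where h: "i<j" "j<k" "k<length xs"
    "\<forall>a<3. \<forall>b<3. (xs ! ([i,j,k]!a) < xs ! ([i,j,k]!b)) \<longleftrightarrow> ([3,1,2::nat]!a < [3,1,2]!b)"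
    using contains_3[of "[3,1,2]" xs] by auto
  from h(4) have "xs!j < xs!k" "xs!k < xs!i" by (auto simp: three_cases)
  with h(1-3) show "\<exists>i j k. i<j \<and> j<k \<and> k<length xs \<and> xs!j < xs!k \<and> xs!k < xs!i" by blast
next
  assume "\<exists>i j k. i<j \<and> j<k \<and> k<length xs \<and> xs!j < xs!k \<and> xs!k < xs!i"
  then obtain i j k where h: "i<j" "j<k" "k<length xs" "xs!j < xs!k" "xs!k < xs!i" by blast
  have "\<forall>a<3. \<forall>b<3. (xs ! ([i,j,k]!a) < xs ! ([i,j,k]!b)) \<longleftrightarrow> ([3,1,2::nat]!a < [3,1,2]!b)"
    using h(4,5) by (auto simp: three_cases)
  then show "contains_pat xs [3,1,2]" using contains_3[of "[3,1,2]" xs] h(1-3) by auto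
qed

lemma av2_eq: "av2 n [2,3,1] [3,1,2] = {xs \<in> perms n. good xs}"
  unfolding av2_def avoids_def c231 c312 good_def by blast


definition ud :: "nat list \<Rightarrow> bool list" where
  "ud xs = map (\<lambda>i. xs!i < xs!Suc i) [0..<length xs - 1]"

lemma ud_length[simp]: "length (ud xs) = length xs - 1"
  by (simp add: ud_def)

lemma ud_snoc: "xs \<noteq> [] \<Longrightarrow> ud (xs @ [v]) = ud xs @ [last xs < v]"
proof -
  assume ne: "xs \<noteq> []"
  then obtain m where m: "length xs = Suc m" by (cases xs) auto
  have "[0..<length (xs @ [v]) - 1] = [0..<m] @ [m]" using m by simp
  moreover have "[0..<length xs - 1] = [0..<m]" using m by simp
  moreover have "last xs = xs ! m" using ne m by (simp add: last_conv_nth)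
  ultimately show ?thesis unfolding ud_def using m by (auto simp: nth_append)
qed

lemma ud_map:
  assumes "\<forall>a\<in>set xs. \<forall>b\<in>set xs. f a < f b \<longleftrightarrow> a < b"
  shows "ud (map f xs) = ud xs"
  unfolding ud_def using assms by (auto simp: nth_map)

lemma good_map:
  assumes "\<forall>a\<in>set xs. \<forall>b\<in>set xs. f a < f b \<longleftrightarrow> a < b"
  shows "good (map f xs) \<longleftrightarrow> good xs"
proof -
  have "\<And>i j. i < length xs \<Longrightarrow> j < length xs \<Longrightarrow> f (xs!i) < f (xs!j) \<longleftrightarrow> xs!i < xs!j"
    using assms by auto
  then show ?thesis unfolding good_def
    by (auto simp: nth_map)
qed

lemma good_take: "good xs \<Longrightarrow> good (take m xs)"
  unfolding good_def by auto

lemma perms_length: "xs \<in> perms n \<Longrightarrow> length xs = n"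
  unfolding perms_def using distinct_card by fastforce

lemma perms_nth: "xs \<in> perms n \<Longrightarrow> i < length xs \<Longrightarrow> xs!i \<in> {1..n}"
  unfolding perms_def using nth_mem by blast

lemma perms_inj: "xs \<in> perms n \<Longrightarrow> i < length xs \<Longrightarrow> j < length xs \<Longrightarrow> xs!i = xs!j \<Longrightarrow> i = j"
  unfolding perms_def using nth_eq_iff_index_eq by blast

lemma perms_one: "perms 1 = {[1]}"
proof -
  have "xs = [1]" if "distinct xs" "set xs = {1}" for xs :: "nat list"
  proof -
    have "length xs = 1" using distinct_card[OF that(1)] that(2) by simp
    then obtain a where "xs = [a]" by (cases xs) auto
    then show ?thesis using that(2) by simp
  qed
  then show ?thesis unfolding perms_def by auto
qed

lemma snoc_max_perms: "xs \<in> perms n \<Longrightarrow> xs @ [Suc n] \<in> perms (Suc n)"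
  unfolding perms_def by auto

lemma snoc_max_good:
  assumes "xs \<in> perms n" "good xs"
  shows "good (xs @ [Suc n])"
  unfolding good_def
proof (intro allI impI)
  fix i j k assume h: "i<j" "j<k" "k < length (xs @ [Suc n])"
  have lt: "\<And>m. m < length xs \<Longrightarrow> xs!m < Suc n" using perms_nth[OF assms(1)] by fastforce
  show "\<not> ((xs @ [Suc n]) ! k < (xs @ [Suc n]) ! i \<and> (xs @ [Suc n]) ! i < (xs @ [Suc n]) ! j) \<and>
        \<not> ((xs @ [Suc n]) ! j < (xs @ [Suc n]) ! k \<and> (xs @ [Suc n]) ! k < (xs @ [Suc n]) ! i)"
  proof (cases "k < length xs")
    case True
    then show ?thesis using assms(2) h unfolding good_def by (auto simp: nth_append)
  next
    case False
    then have "k = length xs" using h by simp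
    then show ?thesis using h lt[of i] lt[of j] by (auto simp: nth_append)
  qed
qed

definition sh :: "nat \<Rightarrow> nat \<Rightarrow> nat" where "sh k v = (if k \<le> v then Suc v else v)"
definition unsh :: "nat \<Rightarrow> nat \<Rightarrow> nat" where "unsh k v = (if k < v then v - 1 else v)"
definition D :: "nat list \<Rightarrow> nat list" where "D xs = map (sh (last xs)) xs @ [last xs]"

lemma sh_less[simp]: "sh k a < sh k b \<longleftrightarrow> a < b"
  unfolding sh_def by auto

lemma sh_eq[simp]: "sh k a = sh k b \<longleftrightarrow> a = b"
  unfolding sh_def by auto

lemma sh_gt: "k < sh k v \<longleftrightarrow> k \<le> v" unfolding sh_def by auto
lemma sh_lt: "sh k v < k \<longleftrightarrow> v < k" unfolding sh_def by auto

lemma D_perms: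
  assumes "xs \<in> perms n" "n \<ge> 1"
  shows "D xs \<in> perms (Suc n)"
proof -
  have len: "length xs = n" using perms_length[OF assms(1)] .
  have ne: "xs \<noteq> []" using len assms(2) by auto
  let ?k = "last xs"
  have k: "?k \<in> {1..n}" using ne assms(1) unfolding perms_def by auto
  have d: "distinct (map (sh ?k) xs)" using assms(1) unfolding perms_def
    by (simp add: distinct_map inj_on_def)
  have nk: "?k \<notin> sh ?k ` set xs" unfolding sh_def by auto
  have s: "sh ?k ` {1..n} \<union> {?k} = {1..Suc n}"
  proof
    show "sh ?k ` {1..n} \<union> {?k} \<subseteq> {1..Suc n}" using k unfolding sh_def by auto
    show "{1..Suc n} \<subseteq> sh ?k ` {1..n} \<union> {?k}"
    proof
      fix v assume v: "v \<in> {1..Suc n}"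
      show "v \<in> sh ?k ` {1..n} \<union> {?k}"
      proof (cases "v < ?k")
        case True then have "sh ?k v = v" unfolding sh_def by auto
        moreover have "v \<in> {1..n}" using True v k by auto
        ultimately have "v \<in> sh ?k ` {1..n}" using rev_image_eqI[of v "{1..n}" v "sh ?k"] by simp
        then show ?thesis by simp
      next
        case False
        show ?thesis
        proof (cases "v = ?k")
          case False
          with \<open>\<not> v < ?k\<close> have "sh ?k (v - 1) = v" "v - 1 \<in> {1..n}" using v k unfolding sh_def by auto
          then have "v \<in> sh ?k ` {1..n}" using rev_image_eqI[of "v-1" "{1..n}" v "sh ?k"] by simp
          then show ?thesis by simp
        qed simp
      qed
    qed
  qed
  show ?thesis using d nk s assms(1) unfolding perms_def D_def by auto
qed

lemma D_good:
  assumes "xs \<in> perms n" "n \<ge> 1" "good xs"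
  shows "good (D xs)"
  unfolding good_def
proof (intro allI impI)
  fix i j k assume h: "i<j" "j<k" "k < length (D xs)"
  have len: "length xs = n" using perms_length[OF assms(1)] .
  have ne: "xs \<noteq> []" using len assms(2) by auto
  let ?l = "last xs"
  let ?f = "sh ?l"
  have l: "?l = xs ! (n - 1)" using ne len by (simp add: last_conv_nth)
  have Dn: "\<And>m. m < n \<Longrightarrow> D xs ! m = ?f (xs ! m)" "D xs ! n = ?l"
    unfolding D_def using len by (auto simp: nth_append)
  have lD: "length (D xs) = Suc n" unfolding D_def using len by simp
  have gx: "\<And>a b c. a<b \<Longrightarrow> b<c \<Longrightarrow> c<n \<Longrightarrow>
     \<not>(xs!c < xs!a \<and> xs!a < xs!b) \<and> \<not>(xs!b < xs!c \<and> xs!c < xs!a)"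
    using assms(3) len unfolding good_def by blast
  have dx: "\<And>a. a < n - 1 \<Longrightarrow> xs!a \<noteq> ?l"
  proof
    fix a assume a: "a < n - 1" "xs!a = ?l"
    have "a < n" "n - 1 < n" using a(1) assms(2) by auto
    then have "a = n - 1" using perms_inj[OF assms(1), of a "n-1"] len l a(2) by auto
    then show False using a by simp
  qed
  show "\<not> (D xs ! k < D xs ! i \<and> D xs ! i < D xs ! j) \<and> \<not> (D xs ! j < D xs ! k \<and> D xs ! k < D xs ! i)"
  proof (cases "k < n")
    case True
    then show ?thesis using Dn(1)[of i] Dn(1)[of j] Dn(1)[of k] h gx[of i j k] by auto
  next
    case False
    then have kn: "k = n" using h lD by simp
    have A: "\<not> (?l < ?f (xs!i) \<and> ?f (xs!i) < ?f (xs!j))"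
    proof
      assume a: "?l < ?f (xs!i) \<and> ?f (xs!i) < ?f (xs!j)"
      then have "?l \<le> xs!i" "xs!i < xs!j" using sh_gt by auto
      moreover have "i < n - 1" using h kn by auto
      ultimately have "?l < xs!i" using dx[of i] by linarith
      have "j \<noteq> n - 1" using \<open>?l < xs!i\<close> \<open>xs!i < xs!j\<close> l by auto
      then have "j < n - 1" using h kn by auto
      then show False using gx[of i j "n-1"] h \<open>?l < xs!i\<close> \<open>xs!i < xs!j\<close> l by auto
    qed
    have B: "\<not> (?f (xs!j) < ?l \<and> ?l < ?f (xs!i))"
    proof
      assume a: "?f (xs!j) < ?l \<and> ?l < ?f (xs!i)"
      then have "xs!j < ?l" "?l \<le> xs!i" using sh_gt sh_lt by auto
      moreover have "i < n - 1" using h kn by auto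
      ultimately have "?l < xs!i" using dx[of i] by linarith
      have "j \<noteq> n - 1" using \<open>xs!j < ?l\<close> l by auto
      then have "j < n - 1" using h kn by auto
      then show False using gx[of i j "n-1"] h \<open>?l < xs!i\<close> \<open>xs!j < ?l\<close> l by auto
    qed
    show ?thesis using A B Dn(1)[of i] Dn(1)[of j] Dn(2) kn h by auto
  qed
qed

lemma decomp:
  assumes s: "s \<in> perms (Suc n)" and g: "good s" and n: "n \<ge> 1"
  shows "\<exists>xs. xs \<in> perms n \<and> good xs \<and> (s = xs @ [Suc n] \<or> s = D xs)"
proof -
  have len: "length s = Suc n" using perms_length[OF s] .
  have val: "\<And>i. i < Suc n \<Longrightarrow> s!i \<in> {1..Suc n}" using perms_nth[OF s] len by simp
  have inj: "\<And>i j. i < Suc n \<Longrightarrow> j < Suc n \<Longrightarrow> s!i = s!j \<Longrightarrow> i = j"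
    using perms_inj[OF s] len by simp
  have ex: "\<And>v. v \<in> {1..Suc n} \<Longrightarrow> \<exists>i<Suc n. s!i = v"
  proof -
    fix v assume "v \<in> {1..Suc n}"
    then have "v \<in> set s" using s unfolding perms_def by simp
    then show "\<exists>i<Suc n. s!i = v" using len by (auto simp: in_set_conv_nth)
  qed
  have gs: "\<And>a b c. a<b \<Longrightarrow> b<c \<Longrightarrow> c<Suc n \<Longrightarrow>
     \<not>(s!c < s!a \<and> s!a < s!b) \<and> \<not>(s!b < s!c \<and> s!c < s!a)"
  proof -
    fix a b c assume "a<b" "b<c" "c<Suc n"
    then show "\<not>(s!c < s!a \<and> s!a < s!b) \<and> \<not>(s!b < s!c \<and> s!c < s!a)"
      using g[unfolded good_def, rule_format, of a b c] len by simp
  qed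
  define x where "x = s!(n-1)"
  define y where "y = s!n"
  have sp: "take n s @ [y] = s"
  proof -
    have "take (Suc n) s = take n s @ [s!n]" by (rule take_Suc_conv_app_nth) (simp add: len)
    moreover have "take (Suc n) s = s" using len by simp
    ultimately show ?thesis unfolding y_def by simp
  qed
  have gt: "good (take n s)" using good_take[OF g] .
  have dt: "distinct (take n s)" using s unfolding perms_def by simp
  have d2: "distinct (take n s @ [y])" using sp s unfolding perms_def by simp
  have yn: "y \<notin> set (take n s)" using d2 by simp
  have "set (take n s @ [y]) = {1..Suc n}" using sp s unfolding perms_def by simp
  then have "insert y (set (take n s)) = {1..Suc n}" by simp
  then have st: "set (take n s) = {1..Suc n} - {y}" using yn by blast
  have nl: "n - 1 < Suc n" by arith
  have xy: "x \<noteq> y" using inj[OF nl lessI] n unfolding x_def y_def by auto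
  show ?thesis
  proof (cases "x < y")
    case True
    have all: "s!i < y" if "i < n" for i
    proof (cases "i = n - 1")
      case True then show ?thesis using \<open>x < y\<close> x_def by simp
    next
      case False
      then have i: "i < n - 1" using that by simp
      have "s!i \<noteq> y" using inj[of i n] that y_def by auto
      moreover have "\<not> (y < s!i)" using gs[of i "n-1" n] i n \<open>x<y\<close> x_def y_def by auto
      ultimately show ?thesis by simp
    qed
    obtain m where m: "m < Suc n" "s!m = Suc n" using ex[of "Suc n"] by auto
    have "y \<le> Suc n" using val[of n] y_def by simp
    then have "m = n" using all[of m] m by (cases "m < n") auto
    then have "y = Suc n" using m y_def by simp
    have e: "{1..Suc n} - {Suc n} = {1..n}" by auto
    have "take n s \<in> perms n" using st dt \<open>y = Suc n\<close> e unfolding perms_def by simp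
    moreover have "s = take n s @ [Suc n]" using sp \<open>y = Suc n\<close> by simp
    ultimately show ?thesis using gt by blast
  next
    case False
    then have yx: "y < x" using xy by simp
    have xs: "x = Suc y"
    proof (rule ccontr)
      assume "x \<noteq> Suc y"
      then have lt: "Suc y < x" using yx by simp
      have "Suc y \<in> {1..Suc n}" using lt val[OF nl] x_def by auto
      then obtain m where m: "m < Suc n" "s!m = Suc y" using ex by blast
      have "m \<noteq> n" using m y_def by auto
      moreover have "m \<noteq> n - 1" using m x_def lt by auto
      ultimately have "m < n - 1" using m by auto
      then show False using gs[of m "n-1" n] n m lt x_def y_def by auto
    qed
    define k where "k = y"
    define xs where "xs = map (unsh k) (take n s)"
    have op: "\<forall>a\<in>set (take n s). \<forall>b\<in>set (take n s). unsh k a < unsh k b \<longleftrightarrow> a < b"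
    proof (intro ballI)
      fix a b assume "a \<in> set (take n s)" "b \<in> set (take n s)"
      then have "a \<noteq> y" "b \<noteq> y" using yn by auto
      then show "unsh k a < unsh k b \<longleftrightarrow> a < b" unfolding k_def unsh_def by auto
    qed
    have k1: "1 \<le> k" "k \<le> n" using val[of n] yx val[OF nl] n unfolding k_def y_def x_def by auto
    have lx: "last xs = k"
    proof -
      have ne: "take n s \<noteq> []" using n len by auto
      have "last (take n s) = x" using ne n len unfolding x_def by (simp add: last_conv_nth min_def)
      then show ?thesis unfolding xs_def using ne n xs unfolding unsh_def k_def
        by (simp add: last_map)
    qed
    have Dx: "D xs = s"
    proof -
      have "map (sh k) xs = take n s" unfolding xs_def using yn
        by (auto simp: map_idI sh_def unsh_def k_def intro!: map_idI)
      then show ?thesis unfolding D_def lx k_def using sp by simp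
    qed
    have "inj_on (unsh k) (set (take n s))"
    proof (rule inj_onI)
      fix a b assume ab: "a \<in> set (take n s)" "b \<in> set (take n s)" "unsh k a = unsh k b"
      show "a = b"
      proof (rule ccontr)
        assume "a \<noteq> b"
        then have "a < b \<or> b < a" by arith
        then show False using op[rule_format, OF ab(1) ab(2)] op[rule_format, OF ab(2) ab(1)] ab(3) by auto
      qed
    qed
    then have dxs: "distinct xs" unfolding xs_def using dt by (simp add: distinct_map)
    have sxs: "set xs = {1..n}"
    proof -
      have "set xs = unsh k ` ({1..Suc n} - {k})" unfolding xs_def using st k_def by simp
      also have "\<dots> = {1..n}"
      proof
        show "unsh k ` ({1..Suc n} - {k}) \<subseteq> {1..n}" using k1 unfolding unsh_def by auto
        show "{1..n} \<subseteq> unsh k ` ({1..Suc n} - {k})"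
        proof
          fix w assume w: "w \<in> {1..n}"
          show "w \<in> unsh k ` ({1..Suc n} - {k})"
          proof (cases "w < k")
            case True
            then have "unsh k w = w" "w \<in> {1..Suc n} - {k}" using w unfolding unsh_def by auto
            then show ?thesis using rev_image_eqI[of w "{1..Suc n} - {k}" w "unsh k"] by simp
          next
            case False
            then have "unsh k (Suc w) = w" "Suc w \<in> {1..Suc n} - {k}" using w unfolding unsh_def by auto
            then show ?thesis using rev_image_eqI[of "Suc w" "{1..Suc n} - {k}" w "unsh k"] by simp
          qed
        qed
      qed
      finally show ?thesis .
    qed
    have "xs \<in> perms n" using dxs sxs unfolding perms_def by simp
    moreover have "good xs" unfolding xs_def using good_map[OF op] gt by simp
    ultimately show ?thesis using Dx by blast
  qed
qed

lemma ud_snoc_max: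
  assumes "xs \<in> perms n" "n \<ge> 1"
  shows "ud (xs @ [Suc n]) = ud xs @ [True]"
proof -
  have ne: "xs \<noteq> []" using perms_length[OF assms(1)] assms(2) by auto
  have "last xs \<in> {1..n}" using ne assms(1) unfolding perms_def by auto
  then show ?thesis using ud_snoc[OF ne] by simp
qed

lemma ud_D:
  assumes "xs \<in> perms n" "n \<ge> 1"
  shows "ud (D xs) = ud xs @ [False]"
proof -
  have ne: "xs \<noteq> []" using perms_length[OF assms(1)] assms(2) by auto
  have ne2: "map (sh (last xs)) xs \<noteq> []" using ne by simp
  have "ud (D xs) = ud (map (sh (last xs)) xs) @ [last (map (sh (last xs)) xs) < last xs]"
    unfolding D_def using ud_snoc[OF ne2] .
  also have "\<dots> = ud xs @ [False]" using ne by (simp add: ud_map last_map sh_def)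
  finally show ?thesis .
qed

lemma good_one: "good [a]" unfolding good_def by auto

lemma bij_ud:
  assumes "n \<ge> 1"
  shows "bij_betw ud {xs \<in> perms n. good xs} {w. length w = n - 1}"
  using assms
proof (induction n rule: nat_induct_at_least)
  case base
  have "{xs \<in> perms 1. good xs} = {[1]}" using perms_one good_one by auto
  moreover have "{w :: bool list. length w = 1 - 1} = {[]}" by auto
  ultimately show ?case by (simp add: bij_betw_def ud_def)
next
  case (Suc n)
  let ?A = "{xs \<in> perms n. good xs}"
  let ?B = "{xs \<in> perms (Suc n). good xs}"
  have injA: "inj_on ud ?A" and imA: "ud ` ?A = {w. length w = n - 1}"
    using Suc.IH unfolding bij_betw_def by auto
  have dec: "\<exists>xs\<in>?A. \<exists>b. s = (if b then xs @ [Suc n] else D xs) \<and> ud s = ud xs @ [b]" if sB: "s \<in> ?B" for s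
  proof -
    obtain xs where xs: "xs \<in> perms n" "good xs" "s = xs @ [Suc n] \<or> s = D xs"
    proof -
      have "s \<in> perms (Suc n)" "good s" using sB by auto
      then show ?thesis using decomp[of s n] Suc.hyps that by blast
    qed
    show ?thesis
    proof (cases "s = xs @ [Suc n]")
      case True
      then show ?thesis using xs ud_snoc_max[OF xs(1) Suc.hyps] by (intro bexI[of _ xs] exI[of _ True]) auto
    next
      case False
      then show ?thesis using xs ud_D[OF xs(1) Suc.hyps] by (intro bexI[of _ xs] exI[of _ False]) auto
    qed
  qed
  have "inj_on ud ?B"
  proof (rule inj_onI)
    fix s1 s2 assume h: "s1 \<in> ?B" "s2 \<in> ?B" "ud s1 = ud s2"
    obtain x1 b1 where 1: "x1 \<in> ?A" "s1 = (if b1 then x1 @ [Suc n] else D x1)" "ud s1 = ud x1 @ [b1]"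
      using dec[OF h(1)] by blast
    obtain x2 b2 where 2: "x2 \<in> ?A" "s2 = (if b2 then x2 @ [Suc n] else D x2)" "ud s2 = ud x2 @ [b2]"
      using dec[OF h(2)] by blast
    have "ud x1 = ud x2" "b1 = b2" using 1(3) 2(3) h(3) by auto
    then have "x1 = x2" using injA 1(1) 2(1) by (simp add: inj_on_def)
    then show "s1 = s2" using 1(2) 2(2) \<open>b1 = b2\<close> by simp
  qed
  moreover have "ud ` ?B = {w. length w = Suc n - 1}"
  proof
    show "ud ` ?B \<subseteq> {w. length w = Suc n - 1}" using perms_length by auto
    show "{w. length w = Suc n - 1} \<subseteq> ud ` ?B"
    proof
      fix w :: "bool list" assume "w \<in> {w. length w = Suc n - 1}"
      then have lw: "length w = n" by simp
      then have w: "butlast w @ [last w] = w" using Suc.hyps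
        by (metis append_butlast_last_id list.size(3) not_one_le_zero)
      have "butlast w \<in> ud ` ?A" using imA lw by simp
      then obtain xs where xs: "xs \<in> ?A" "ud xs = butlast w" by auto
      show "w \<in> ud ` ?B"
      proof (cases "last w")
        case True
        have m: "xs @ [Suc n] \<in> ?B" using xs snoc_max_perms snoc_max_good by auto
        have e: "w = ud (xs @ [Suc n])" using ud_snoc_max[of xs n] xs Suc.hyps w True by simp
        show ?thesis using image_eqI[where f=ud, OF e m] .
      next
        case False
        have m: "D xs \<in> ?B" using xs D_perms D_good Suc.hyps by auto
        have e: "w = ud (D xs)" using ud_D[of xs n] xs Suc.hyps w False by simp
        show ?thesis using image_eqI[where f=ud, OF e m] .
      qed
    qed
  qed
  ultimately show ?case unfolding bij_betw_def by blast
qed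

definition mnis :: "nat set \<Rightarrow> nat" where
  "mnis S = Max (card ` {I. I \<subseteq> S \<and> nonadj I})"

lemma mnis_fin: "finite S \<Longrightarrow> finite (card ` {I. I \<subseteq> S \<and> nonadj I})"
  by (rule finite_imageI) (rule finite_subset[of _ "Pow S"], auto)

lemma mnis_ne: "card ` {I. I \<subseteq> S \<and> nonadj I} \<noteq> {}"
proof -
  have "{} \<in> {I. I \<subseteq> S \<and> nonadj I}" by (simp add: nonadj_def)
  then show ?thesis by blast
qed

lemma mnis_ge: "finite S \<Longrightarrow> I \<subseteq> S \<Longrightarrow> nonadj I \<Longrightarrow> card I \<le> mnis S"
  unfolding mnis_def by (rule Max_ge[OF mnis_fin]) auto

lemma mnis_ex: "finite S \<Longrightarrow> \<exists>I. I \<subseteq> S \<and> nonadj I \<and> card I = mnis S"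
proof -
  assume f: "finite S"
  have "mnis S \<in> card ` {I. I \<subseteq> S \<and> nonadj I}"
    unfolding mnis_def by (rule Max_in[OF mnis_fin[OF f] mnis_ne])
  then show ?thesis by auto
qed

lemma mnis_mono: "S \<subseteq> T \<Longrightarrow> finite T \<Longrightarrow> mnis S \<le> mnis T"
proof -
  assume st: "S \<subseteq> T" and f: "finite T"
  then have "finite S" by (rule finite_subset)
  then obtain I where "I \<subseteq> S" "nonadj I" "card I = mnis S" using mnis_ex by blast
  then show ?thesis using mnis_ge[OF f, of I] st by auto
qed

lemma mnis_empty: "mnis {} = 0"
proof -
  obtain I where "I \<subseteq> {}" "card I = mnis {}" using mnis_ex[of "{}"] by auto
  then show ?thesis by simp
qed

lemma nonadj_subset: "nonadj J \<Longrightarrow> I \<subseteq> J \<Longrightarrow> nonadj I"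
  unfolding nonadj_def by blast

lemma nonadj_Suc: "nonadj (Suc ` I) \<longleftrightarrow> nonadj I"
  unfolding nonadj_def by auto

lemma mnis_Suc: assumes f: "finite S" shows "mnis (Suc ` S) = mnis S"
proof (rule antisym)
  obtain J where J: "J \<subseteq> Suc ` S" "nonadj J" "card J = mnis (Suc ` S)"
    using mnis_ex[of "Suc ` S"] f by auto
  define I where "I = {i. Suc i \<in> J}"
  have JI: "J = Suc ` I" unfolding I_def using J(1) by auto
  have "I \<subseteq> S" using J(1) unfolding I_def by auto
  moreover have "nonadj I" using J(2) JI nonadj_Suc by simp
  moreover have "card J = card I" using JI by (simp add: card_image)
  ultimately show "mnis (Suc ` S) \<le> mnis S" using mnis_ge[OF f] J(3) by metis
next
  obtain I where I: "I \<subseteq> S" "nonadj I" "card I = mnis S" using mnis_ex[OF f] by auto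
  have "Suc ` I \<subseteq> Suc ` S" using I by auto
  moreover have "nonadj (Suc ` I)" using I nonadj_Suc by simp
  moreover have "card (Suc ` I) = card I" by (simp add: card_image)
  ultimately show "mnis S \<le> mnis (Suc ` S)" using mnis_ge[of "Suc ` S"] f I(3) by (metis finite_imageI)
qed

lemma mnis_02_ge: assumes f: "finite S" shows "Suc (mnis S) \<le> mnis (insert 0 (Suc ` Suc ` S))"
proof -
  obtain I where I: "I \<subseteq> S" "nonadj I" "card I = mnis S" using mnis_ex[OF f] by auto
  have fI: "finite I" using I(1) f by (rule finite_subset)
  let ?J = "insert 0 (Suc ` Suc ` I)"
  have "?J \<subseteq> insert 0 (Suc ` Suc ` S)" using I by auto
  moreover have "nonadj ?J" unfolding nonadj_def
  proof (intro ballI impI)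
    fix a b assume a: "a \<in> ?J" and b: "b \<in> ?J" and ab: "a \<noteq> b"
    show "2 \<le> (if a \<le> b then b - a else a - b)"
    proof (cases "a = 0 \<or> b = 0")
      case True then show ?thesis using a b ab by auto
    next
      case False
      then obtain a' b' where "a = Suc (Suc a')" "b = Suc (Suc b')" "a' \<in> I" "b' \<in> I" using a b by auto
      then show ?thesis using I(2)[unfolded nonadj_def, rule_format, of a' b'] ab by auto
    qed
  qed
  moreover have "card ?J = Suc (card I)" using fI by (simp add: card_image)
  ultimately show ?thesis using mnis_ge[of "insert 0 (Suc ` Suc ` S)" ?J] f I(3) by simp
qed

lemma mnis_012_le: assumes f: "finite S" shows "mnis (insert 0 (insert 1 (Suc ` Suc ` S))) \<le> Suc (mnis S)"
proof -
  obtain J where J: "J \<subseteq> insert 0 (insert 1 (Suc ` Suc ` S))" "nonadj J"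
     "card J = mnis (insert 0 (insert 1 (Suc ` Suc ` S)))"
    using mnis_ex[of "insert 0 (insert 1 (Suc ` Suc ` S))"] f by auto
  define I where "I = {i. Suc (Suc i) \<in> J}"
  have IS: "I \<subseteq> S" using J(1) unfolding I_def by auto
  have sub: "Suc ` Suc ` I \<subseteq> J" unfolding I_def by auto
  have "nonadj I" using nonadj_subset[OF J(2) sub] nonadj_Suc by simp
  then have cI: "card I \<le> mnis S" using mnis_ge[OF f IS] by simp
  have fI: "finite I" using IS f by (rule finite_subset)
  have split: "J \<subseteq> (J \<inter> {0,1}) \<union> Suc ` Suc ` I"
  proof
    fix j assume "j \<in> J"
    then show "j \<in> (J \<inter> {0,1}) \<union> Suc ` Suc ` I"
      unfolding I_def by (cases j; cases "j - 1") auto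
  qed
  have c01: "card (J \<inter> {0,1}) \<le> 1"
  proof (cases "0 \<in> J \<and> 1 \<in> J")
    case True
    then have False using J(2)[unfolded nonadj_def, rule_format, of 0 1] by simp
    then show ?thesis ..
  next
    case False
    then have "J \<inter> {0,1} \<subseteq> {0} \<or> J \<inter> {0,1} \<subseteq> {1}" by auto
    then show ?thesis
    proof
      assume "J \<inter> {0,1} \<subseteq> {0}" then show ?thesis using card_mono[of "{0}" "J \<inter> {0,1}"] by simp
    next
      assume "J \<inter> {0,1} \<subseteq> {1}" then show ?thesis using card_mono[of "{1}" "J \<inter> {0,1}"] by simp
    qed
  qed
  have "card J \<le> card ((J \<inter> {0,1}) \<union> Suc ` Suc ` I)"
    using split fI by (intro card_mono) auto
  also have "\<dots> \<le> card (J \<inter> {0,1}) + card (Suc ` Suc ` I)" by (rule card_Un_le)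
  also have "\<dots> \<le> 1 + card I" using c01 by (simp add: card_image)
  finally show ?thesis using J(3) cI by simp
qed

lemma mnis_02: assumes f: "finite S" shows "mnis (insert 0 (Suc ` Suc ` S)) = Suc (mnis S)"
proof -
  have "mnis (insert 0 (Suc ` Suc ` S)) \<le> mnis (insert 0 (insert 1 (Suc ` Suc ` S)))"
    using f by (intro mnis_mono) auto
  then show ?thesis using mnis_02_ge[OF f] mnis_012_le[OF f] by simp
qed

lemma mnis_012: assumes f: "finite S" shows "mnis (insert 0 (insert 1 (Suc ` Suc ` S))) = Suc (mnis S)"
proof -
  have "mnis (insert 0 (Suc ` Suc ` S)) \<le> mnis (insert 0 (insert 1 (Suc ` Suc ` S)))"
    using f by (intro mnis_mono) auto
  then show ?thesis using mnis_02_ge[OF f] mnis_012_le[OF f] by simp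
qed

definition Pos :: "bool list \<Rightarrow> nat set" where "Pos w = {i. i < length w \<and> w!i}"
definition Neg :: "bool list \<Rightarrow> nat set" where "Neg w = {i. i < length w \<and> \<not> w!i}"

lemma Pos_fin[simp]: "finite (Pos w)" unfolding Pos_def by auto
lemma Neg_fin[simp]: "finite (Neg w)" unfolding Neg_def by auto

lemma Pos_Nil[simp]: "Pos [] = {}" unfolding Pos_def by auto
lemma Neg_Nil[simp]: "Neg [] = {}" unfolding Neg_def by auto

lemma Pos_Cons: "Pos (b # w) = (if b then insert 0 (Suc ` Pos w) else Suc ` Pos w)"
proof (rule set_eqI)
  fix i show "i \<in> Pos (b # w) \<longleftrightarrow> i \<in> (if b then insert 0 (Suc ` Pos w) else Suc ` Pos w)"
    by (cases i) (auto simp: Pos_def image_iff)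
qed

lemma Neg_Cons: "Neg (b # w) = (if b then Suc ` Neg w else insert 0 (Suc ` Neg w))"
proof (rule set_eqI)
  fix i show "i \<in> Neg (b # w) \<longleftrightarrow> i \<in> (if b then Suc ` Neg w else insert 0 (Suc ` Neg w))"
    by (cases i) (auto simp: Neg_def image_iff)
qed

context
  fixes p q y z :: "'a::comm_ring_1"
begin

definition Wt :: "bool list \<Rightarrow> 'a" where
  "Wt w = p ^ card (Pos w) * q ^ card (Neg w) * y ^ mnis (Pos w) * z ^ mnis (Neg w)"

lemma Wt_Nil: "Wt [] = 1" unfolding Wt_def by (simp add: mnis_empty)

lemma card_Suc_img: "card (Suc ` X) = card X" by (simp add: card_image)
lemma card_ins0: "finite X \<Longrightarrow> card (insert 0 (Suc ` X)) = Suc (card X)"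
  by (simp add: card_image)

lemma Wt_TT: "Wt (True # True # u) = p^2 * y * Wt u"
proof -
  have P: "Pos (True # True # u) = insert 0 (insert 1 (Suc ` Suc ` Pos u))" by (simp add: Pos_Cons)
  have N: "Neg (True # True # u) = Suc ` Suc ` Neg u" by (simp add: Neg_Cons)
  have cP: "card (Pos (True # True # u)) = Suc (Suc (card (Pos u)))"
    unfolding P by (simp add: card_image image_iff)
  have cN: "card (Neg (True # True # u)) = card (Neg u)" unfolding N by (simp add: card_image)
  have mP: "mnis (Pos (True # True # u)) = Suc (mnis (Pos u))" unfolding P using mnis_012[of "Pos u"] mnis_012[of "Neg u"] by simp
  have mN: "mnis (Neg (True # True # u)) = mnis (Neg u)" unfolding N by (simp add: mnis_Suc)
  show ?thesis unfolding Wt_def cP cN mP mN by (simp add: algebra_simps power2_eq_square)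
qed

lemma Wt_FF: "Wt (False # False # u) = q^2 * z * Wt u"
proof -
  have P: "Neg (False # False # u) = insert 0 (insert 1 (Suc ` Suc ` Neg u))" by (simp add: Neg_Cons)
  have N: "Pos (False # False # u) = Suc ` Suc ` Pos u" by (simp add: Pos_Cons)
  have cP: "card (Neg (False # False # u)) = Suc (Suc (card (Neg u)))"
    unfolding P by (simp add: card_image image_iff)
  have cN: "card (Pos (False # False # u)) = card (Pos u)" unfolding N by (simp add: card_image)
  have mP: "mnis (Neg (False # False # u)) = Suc (mnis (Neg u))" unfolding P using mnis_012[of "Pos u"] mnis_012[of "Neg u"] by simp
  have mN: "mnis (Pos (False # False # u)) = mnis (Pos u)" unfolding N by (simp add: mnis_Suc)
  show ?thesis unfolding Wt_def cP cN mP mN by (simp add: algebra_simps power2_eq_square)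
qed

lemma Wt_TF: "Wt (True # False # u) = p * y * Wt (False # u)"
proof -
  have P: "Pos (True # False # u) = insert 0 (Suc ` Suc ` Pos u)" "Pos (False # u) = Suc ` Pos u"
    by (simp_all add: Pos_Cons)
  have N: "Neg (True # False # u) = Suc ` Neg (False # u)" by (simp add: Neg_Cons)
  have cP: "card (Pos (True # False # u)) = Suc (card (Pos (False # u)))"
    unfolding P by (simp add: card_image)
  have cN: "card (Neg (True # False # u)) = card (Neg (False # u))" unfolding N by (simp add: card_image)
  have mP: "mnis (Pos (True # False # u)) = Suc (mnis (Pos (False # u)))" unfolding P
    by (simp add: mnis_02 mnis_Suc)
  have mN: "mnis (Neg (True # False # u)) = mnis (Neg (False # u))" unfolding N by (simp add: mnis_Suc)
  show ?thesis unfolding Wt_def cP cN mP mN by (simp add: algebra_simps)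
qed

lemma Wt_FT: "Wt (False # True # u) = q * z * Wt (True # u)"
proof -
  have P: "Neg (False # True # u) = insert 0 (Suc ` Suc ` Neg u)" "Neg (True # u) = Suc ` Neg u"
    by (simp_all add: Neg_Cons)
  have N: "Pos (False # True # u) = Suc ` Pos (True # u)" by (simp add: Pos_Cons)
  have cP: "card (Neg (False # True # u)) = Suc (card (Neg (True # u)))"
    unfolding P by (simp add: card_image)
  have cN: "card (Pos (False # True # u)) = card (Pos (True # u))" unfolding N by (simp add: card_image)
  have mP: "mnis (Neg (False # True # u)) = Suc (mnis (Neg (True # u)))" unfolding P
    by (simp add: mnis_02 mnis_Suc)
  have mN: "mnis (Pos (False # True # u)) = mnis (Pos (True # u))" unfolding N by (simp add: mnis_Suc)
  show ?thesis unfolding Wt_def cP cN mP mN by (simp add: algebra_simps)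
qed

lemma Wt_T: "Wt [True] = p * y"
proof -
  have "Pos [True] = insert 0 (Suc ` Suc ` {})" by (simp add: Pos_Cons)
  then have "mnis (Pos [True]) = 1" using mnis_02[of "{}"] by (simp add: mnis_empty)
  moreover have "Pos [True] = {0}" "Neg [True] = {}" by (simp_all add: Pos_Cons Neg_Cons)
  ultimately show ?thesis unfolding Wt_def by (simp add: mnis_empty)
qed

lemma Wt_F: "Wt [False] = q * z"
proof -
  have "Neg [False] = insert 0 (Suc ` Suc ` {})" by (simp add: Neg_Cons)
  then have "mnis (Neg [False]) = 1" using mnis_02[of "{}"] by (simp add: mnis_empty)
  moreover have "Neg [False] = {0}" "Pos [False] = {}" by (simp_all add: Pos_Cons Neg_Cons)
  ultimately show ?thesis unfolding Wt_def by (simp add: mnis_empty)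
qed

abbreviation L :: "nat \<Rightarrow> bool list set" where "L m \<equiv> {w. length w = m}"

lemma L_fin: "finite (L m)"
proof -
  have "L m = {xs. set xs \<subseteq> UNIV \<and> length xs = m}" by auto
  then show ?thesis using finite_lists_length_eq[OF finite_UNIV, of m] by simp
qed

lemma sum_L_Suc: "(\<Sum>w\<in>L (Suc m). f w) = (\<Sum>u\<in>L m. f (True # u)) + (\<Sum>u\<in>L m. f (False # u))"
proof -
  have e: "L (Suc m) = Cons True ` L m \<union> Cons False ` L m"
  proof
    show "L (Suc m) \<subseteq> Cons True ` L m \<union> Cons False ` L m"
    proof
      fix w assume "w \<in> L (Suc m)"
      then obtain b u where "w = b # u" "length u = m" by (cases w) auto
      then show "w \<in> Cons True ` L m \<union> Cons False ` L m" by (cases b) auto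
    qed
  qed auto
  have "(\<Sum>w\<in>L (Suc m). f w) = (\<Sum>w\<in>Cons True ` L m. f w) + (\<Sum>w\<in>Cons False ` L m. f w)"
    unfolding e by (rule sum.union_disjoint) (auto simp: L_fin)
  also have "\<dots> = (\<Sum>u\<in>L m. f (True # u)) + (\<Sum>u\<in>L m. f (False # u))"
    by (simp add: sum.reindex)
  finally show ?thesis .
qed

definition tt :: "nat \<Rightarrow> 'a" where "tt m = (\<Sum>w\<in>L m. Wt w)"
definition aa :: "nat \<Rightarrow> 'a" where "aa m = (\<Sum>u\<in>L m. Wt (True # u))"
definition bb :: "nat \<Rightarrow> 'a" where "bb m = (\<Sum>u\<in>L m. Wt (False # u))"

lemma tt0: "tt 0 = 1" unfolding tt_def by (simp add: Wt_Nil)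
lemma tt_Suc: "tt (Suc m) = aa m + bb m" unfolding tt_def aa_def bb_def by (rule sum_L_Suc)
lemma aa0: "aa 0 = p * y" unfolding aa_def by (simp add: Wt_T)
lemma bb0: "bb 0 = q * z" unfolding bb_def by (simp add: Wt_F)
lemma aa_Suc: "aa (Suc m) = p^2 * y * tt m + p * y * bb m"
  unfolding aa_def tt_def bb_def sum_L_Suc[where m=m and f="\<lambda>u. Wt (True # u)"]
  by (simp add: Wt_TT Wt_TF sum_distrib_left)
lemma bb_Suc: "bb (Suc m) = q^2 * z * tt m + q * z * aa m"
  unfolding aa_def tt_def bb_def sum_L_Suc[where m=m and f="\<lambda>u. Wt (False # u)"]
  by (simp add: Wt_FF Wt_FT sum_distrib_left add.commute)

lemma ring_id: fixes a b t :: 'a shows "p^2*y*(a+b) + p*y*(q^2*z*t + q*z*a) + (q^2*z*(a+b) + q*z*(p^2*y*t + p*y*b))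
   = (p^2*y+q^2*z+p*q*y*z)*(a+b) + (p^2*q+p*q^2)*y*z*t"
  by (simp add: algebra_simps power2_eq_square)

lemma tt_rec: "tt (Suc (Suc (Suc m))) =
   (p^2*y + q^2*z + p*q*y*z) * tt (Suc m) + (p^2*q + p*q^2)*y*z * tt m"
proof -
  have 1: "tt (Suc (Suc (Suc m))) = aa (Suc (Suc m)) + bb (Suc (Suc m))" by (rule tt_Suc)
  have 2: "aa (Suc (Suc m)) = p^2*y*tt (Suc m) + p*y*bb (Suc m)" by (rule aa_Suc)
  have 3: "bb (Suc (Suc m)) = q^2*z*tt (Suc m) + q*z*aa (Suc m)" by (rule bb_Suc)
  have 4: "aa (Suc m) = p^2*y*tt m + p*y*bb m" by (rule aa_Suc)
  have 5: "bb (Suc m) = q^2*z*tt m + q*z*aa m" by (rule bb_Suc)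
  have 6: "tt (Suc m) = aa m + bb m" by (rule tt_Suc)
  show ?thesis unfolding 1 2 3 4 5 6 by (rule ring_id)
qed

lemma tt1: "tt 1 = p*y + q*z" using tt_Suc[of 0] by (simp add: aa0 bb0)
lemma tt2: "tt 2 = p^2*y + q^2*z + 2*p*q*y*z"
  using tt_Suc[of 1] by (simp add: aa_Suc bb_Suc tt0 aa0 bb0 algebra_simps power2_eq_square numeral_eq_Suc)

end

lemma Pos_ud: "Pos (ud xs) = ascset xs"
  unfolding Pos_def ascset_def ud_def by (auto simp: nth_map)

lemma Neg_ud: "distinct xs \<Longrightarrow> Neg (ud xs) = desset xs"
proof -
  assume d: "distinct xs"
  have ne: "xs!i \<noteq> xs!Suc i" if "Suc i < length xs" for i
    using nth_eq_iff_index_eq[OF d, of i "Suc i"] that by auto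
  have ne': "(\<not> xs!i < xs!Suc i) = (xs!Suc i < xs!i)" if "i < length xs - 1" for i
  proof -
    have "Suc i < length xs" using that by linarith
    then show ?thesis using ne[of i] by auto
  qed
  show ?thesis unfolding Neg_def desset_def ud_def
    by (auto simp: nth_map ne')
qed

lemma weight_ud:
  assumes "xs \<in> perms n"
  shows "p ^ asc xs * q ^ des xs * y ^ MNA xs * z ^ MND xs = Wt p q y z (ud xs)"
proof -
  have d: "distinct xs" using assms unfolding perms_def by simp
  show ?thesis unfolding Wt_def asc_def des_def MNA_def MND_def mnis_def Pos_ud Neg_ud[OF d] ..
qed

lemma perms_zero: "perms 0 = {[]}" unfolding perms_def by auto

lemma coeff_G:
  "fps_nth (G231_312 p q y z) n = (if n = 0 then 1 else tt p q y z (n - 1))"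
proof (cases n)
  case 0
  have "av2 0 [2,3,1] [3,1,2] = {[]}" unfolding av2_eq perms_zero by (auto simp: good_def)
  then show ?thesis using 0 unfolding G231_312_def
    by (simp add: asc_def des_def MNA_def MND_def ascset_def desset_def nonadj_def)
next
  case (Suc m)
  have "fps_nth (G231_312 p q y z) n = (\<Sum>xs\<in>{xs \<in> perms (Suc m). good xs}. Wt p q y z (ud xs))"
    unfolding G231_312_def av2_eq Suc fps_nth_Abs_fps
    by (rule sum.cong[OF refl]) (use weight_ud in auto)
  also have "\<dots> = (\<Sum>w\<in>{w. length w = Suc m - 1}. Wt p q y z w)"
    by (rule sum.reindex_bij_betw[OF bij_ud]) simp
  also have "\<dots> = tt p q y z m" unfolding tt_def by simp
  finally show ?thesis using Suc by simp
qed

lemma mult_den_nth: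
  fixes G :: "'a::comm_ring_1 fps"
  shows "fps_nth (G * (1 - fps_const c1 * fps_X^2 - fps_const c2 * fps_X^3)) n =
    fps_nth G n - (if n < 2 then 0 else c1 * fps_nth G (n-2)) - (if n < 3 then 0 else c2 * fps_nth G (n-3))"
proof -
  have "G * (1 - fps_const c1 * fps_X^2 - fps_const c2 * fps_X^3) =
     G - fps_const c1 * (fps_X^2 * G) - fps_const c2 * (fps_X^3 * G)"
    by (simp add: algebra_simps)
  then show ?thesis by (simp add: fps_X_power_mult_nth)
qed

theorem theorem6:
  fixes p q y z :: "'a::field"
  defines "X \<equiv> (fps_X :: 'a fps)"
      and "P \<equiv> fps_const p" and "Q \<equiv> fps_const q"
      and "Y \<equiv> fps_const y" and "Z \<equiv> fps_const z"
  shows "G231_312 p q y z =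
    (1 + X + P * X^2 * Y - P^2 * X^2 * Y + Q * X^2 * Z - Q^2 * X^2 * Z
       - P * Q * X^2 * Y * Z + P * Q * X^3 * Y * Z - P^2 * Q * X^3 * Y * Z
       - P * Q^2 * X^3 * Y * Z)
    / (1 - P^2 * X^2 * Y - Q^2 * X^2 * Z - P * Q * X^2 * Y * Z
         - P^2 * Q * X^3 * Y * Z - P * Q^2 * X^3 * Y * Z)"
proof -
  define c1 where "c1 = p^2*y + q^2*z + p*q*y*z"
  define c2 where "c2 = (p^2*q + p*q^2)*y*z"
  define d2 where "d2 = p*y - p^2*y + q*z - q^2*z - p*q*y*z"
  define d3 where "d3 = p*q*y*z - p^2*q*y*z - p*q^2*y*z"
  let ?num = "1 + X + P * X^2 * Y - P^2 * X^2 * Y + Q * X^2 * Z - Q^2 * X^2 * Z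
       - P * Q * X^2 * Y * Z + P * Q * X^3 * Y * Z - P^2 * Q * X^3 * Y * Z
       - P * Q^2 * X^3 * Y * Z"
  let ?den = "1 - P^2 * X^2 * Y - Q^2 * X^2 * Z - P * Q * X^2 * Y * Z
         - P^2 * Q * X^3 * Y * Z - P * Q^2 * X^3 * Y * Z"
  let ?G = "G231_312 p q y z"
  have den_nth: "fps_nth ?den n = (if n = 0 then 1 else if n = 2 then - c1 else if n = 3 then - c2 else 0)" for n
    by (simp add: X_def P_def Q_def Y_def Z_def c1_def c2_def algebra_simps)
  have den: "?den = 1 - fps_const c1 * fps_X^2 - fps_const c2 * fps_X^3"
  proof (rule fps_ext)
    fix n show "fps_nth ?den n = fps_nth (1 - fps_const c1 * fps_X^2 - fps_const c2 * fps_X^3) n"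
      unfolding den_nth by simp
  qed
  have num_nth: "fps_nth ?num n = (if n = 0 then 1 else if n = 1 then 1 else if n = 2 then d2
      else if n = 3 then d3 else 0)" for n
    by (simp add: X_def P_def Q_def Y_def Z_def d2_def d3_def algebra_simps)
  have g: "fps_nth ?G n = (if n = 0 then 1 else tt p q y z (n - 1))" for n by (rule coeff_G)
  have prod: "?G * ?den = ?num"
  proof (rule fps_ext)
    fix n
    have dn: "fps_nth (?G * ?den) n = fps_nth ?G n - (if n < 2 then 0 else c1 * fps_nth ?G (n-2))
        - (if n < 3 then 0 else c2 * fps_nth ?G (n-3))"
      unfolding den by (rule mult_den_nth)
    consider "n = 0" | "n = 1" | "n = 2" | "n = 3" | m where "n = Suc (Suc (Suc (Suc m)))"
      by (metis One_nat_def Suc_1 numeral_3_eq_3 not0_implies_Suc)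
    then show "fps_nth (?G * ?den) n = fps_nth ?num n"
    proof cases
      case 1 then show ?thesis unfolding dn num_nth g by simp
    next
      case 2 then show ?thesis unfolding dn num_nth g by (simp add: tt0)
    next
      case 3 then show ?thesis unfolding dn num_nth g using tt1[of p q y z] by (simp add: tt0 c1_def d2_def)
    next
      case 4 then show ?thesis unfolding dn num_nth g
        by (simp add: tt2 tt0 c1_def c2_def d3_def algebra_simps)
    next
      case (5 m)
      then show ?thesis unfolding dn num_nth g
        using tt_rec[of p q y z m] by (simp add: c1_def c2_def)
    qed
  qed
  have d0: "fps_nth ?den 0 \<noteq> 0" unfolding den by simp
  have "?num / ?den = ?G * ?den * inverse ?den" using prod fps_divide_unit[OF d0] by simp
  also have "\<dots> = ?G" using inverse_mult_eq_1'[OF d0] by (simp add: mult.assoc)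
  finally show ?thesis by simp
qed

end
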